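(* Let $\mathcal{M}=(S,s_I,\mathit{Act},\mathcal{P},\mathit{AP},\mathcal{L})$ be a Markov decision process (in the setting of the paper, the product of the robot MDP with a deterministic Rabin automaton for an LTL specification $\varphi$, with all states of end components made absorbing), let $B\subseteq S$ be the set of states in accepting end components, let $S_r$ be the set of states not in $B$ with nonzero probability of reaching $B$, let $\sigma_h$ be a memoryless randomized (human) strategy, and let $\beta\in[0,1]$. Then the shared control synthesis problem $$\min_{\sigma_{ha}}\ \max_{s\in S,\alpha\in\mathit{Act}}|\sigma_h(s,\alpha)-\sigma_{ha}(s,\alpha)|\quad\text{subject to}\quad \mathbb{P}_{\mathcal{M}^{\sigma_{ha}}}(s_I\models\varphi)\ge\beta$$ can be formulated as the following nonlinear program in the variables $x(s,\alpha)\in[0,\infty)$ for $s\in S_r,\alpha\in\mathit{Act}$, $x(s)\in[0,1]$ for $s\in B$, and $\hat\delta\in[0,1]$: minimize $\hat\delta$ subject to (i) for all $s\in S_r$: $\sum_{\alpha\in\mathit{Act}}x(s,\alpha)=\sum_{s'\in S_r}\sum_{\alpha\in\mathit{Act}}\mathcal{P}(s',\alpha,s)\,x(s',\alpha)+\alpha_s$; (ii) for all $s\in B$: $x(s)=\sum_{s'\in S_r}\sum_{\alpha\in\mathit{Act}}\mathcal{P}(s',\alpha,s)\,x(s',\alpha)+\alpha_s$; (iii) $\sum_{s\in B}x(s)\ge\beta$; (iv) for all $s\in S_r$ and $\alpha\in\mathit{Act}$: $\big|x(s,\alpha)-\sum_{\alpha'\in\mathit{Act}}x(s,\alpha')\,\sigma_h(s,\alpha)\big|\le\hat\delta\sum_{\alpha'\in\mathit{Act}}x(s,\alpha')$;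 where $\alpha_s=1$ if $s=s_I$ and $\alpha_s=0$ otherwise, and the repaired strategy is recovered as $\sigma_{ha}(s,\alpha)=x(s,\alpha)/\sum_{\alpha'\in\mathit{Act}}x(s,\alpha')$.
   Context: An MDP has finite state set $S$, initial state $s_I$, finite action set $\mathit{Act}$, transition function $\mathcal{P}:S\times\mathit{Act}\to\mathrm{Distr}(S)$, atomic propositions $\mathit{AP}$ and labeling $\mathcal{L}:S\to 2^{\mathit{AP}}$. A memoryless randomized strategy is $\sigma:S\to\mathrm{Distr}(\mathit{Act})$; $\mathcal{M}^\sigma$ denotes the induced Markov chain with $\mathcal{P}^\sigma(s,s')=\sum_\alpha\sigma(s,\alpha)\mathcal{P}(s,\alpha,s')$, and $\mathbb{P}_{\mathcal{M}^\sigma}(s_I\models\varphi)$ is the probability that a path from $s_I$ satisfies the LTL formula $\varphi$ (equivalently, in the product MDP, reaches the accepting end component states $B$). The variable $x(s,\alpha)$ represents the occupancy measure (expected number of times action $\alpha$ is taken in state $s$) and $x(s)$ the probability of reaching $s\in B$. It is assumed there exists a strategy satisfying $\varphi$ with probability at least $\beta$, and that all states are reachable. *)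

theory Defs
  imports Complex_Main
begin

text \<open>An MDP over a finite state type 's and finite action type 'a; the transition
  function is P s a s' (probability of moving from s to s' under action a).
  Every action is enabled in every state.\<close>

definition is_mdp :: "('s::finite \<Rightarrow> 'a::finite \<Rightarrow> 's \<Rightarrow> real) \<Rightarrow> bool" where
  "is_mdp P \<longleftrightarrow> (\<forall>s a s'. 0 \<le> P s a s') \<and> (\<forall>s a. (\<Sum>s'\<in>UNIV. P s a s') = 1)"

definition is_strategy :: "('s::finite \<Rightarrow> 'a::finite \<Rightarrow> real) \<Rightarrow> bool" where
  "is_strategy \<sigma> \<longleftrightarrow> (\<forall>s a. 0 \<le> \<sigma> s a) \<and> (\<forall>s. (\<Sum>a\<in>UNIV. \<sigma> s a) = 1)"

definition induced :: "('s::finite \<Rightarrow> 'a::finite \<Rightarrow> 's \<Rightarrow> real) \<Rightarrow> ('s \<Rightarrow> 'a \<Rightarrow> real) \<Rightarrow> 's \<Rightarrow> 's \<Rightarrow> real" where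
  "induced P \<sigma> s s' = (\<Sum>a\<in>UNIV. \<sigma> s a * P s a s')"

fun reach_n :: "('s::finite \<Rightarrow> 'a::finite \<Rightarrow> 's \<Rightarrow> real) \<Rightarrow> 's set \<Rightarrow> ('s \<Rightarrow> 'a \<Rightarrow> real) \<Rightarrow> nat \<Rightarrow> 's \<Rightarrow> real" where
  "reach_n P B \<sigma> 0 s = (if s \<in> B then 1 else 0)"
| "reach_n P B \<sigma> (Suc n) s =
     (if s \<in> B then 1 else (\<Sum>s'\<in>UNIV. induced P \<sigma> s s' * reach_n P B \<sigma> n s'))"

text \<open>Probability, in M^\<sigma>, of eventually reaching B from s (limit of the
  nondecreasing bounded step-bounded reachability probabilities).\<close>
definition reach_prob :: "('s::finite \<Rightarrow> 'a::finite \<Rightarrow> 's \<Rightarrow> real) \<Rightarrow> 's set \<Rightarrow> ('s \<Rightarrow> 'a \<Rightarrow> real) \<Rightarrow> 's \<Rightarrow> real" where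
  "reach_prob P B \<sigma> s = (SUP n. reach_n P B \<sigma> n s)"

definition S_r :: "('s::finite \<Rightarrow> 'a::finite \<Rightarrow> 's \<Rightarrow> real) \<Rightarrow> 's set \<Rightarrow> 's set" where
  "S_r P B = {s. s \<notin> B \<and> (\<exists>\<sigma>. is_strategy \<sigma> \<and> 0 < reach_prob P B \<sigma> s)}"

definition deviation :: "('s::finite \<Rightarrow> 'a::finite \<Rightarrow> real) \<Rightarrow> ('s \<Rightarrow> 'a \<Rightarrow> real) \<Rightarrow> real" where
  "deviation \<sigma>h \<sigma> = Max (range (\<lambda>(s, a). \<bar>\<sigma>h s a - \<sigma> s a\<bar>))"

definition inflow :: "('s::finite \<Rightarrow> 'a::finite \<Rightarrow> 's \<Rightarrow> real) \<Rightarrow> 's set \<Rightarrow> 's \<Rightarrow> ('s \<Rightarrow> 'a \<Rightarrow> real) \<Rightarrow> 's \<Rightarrow> real" where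
  "inflow P B sI x s =
     (\<Sum>s'\<in>S_r P B. \<Sum>a\<in>UNIV. P s' a s * x s' a) + (if s = sI then 1 else 0)"

definition nlp_feasible ::
  "('s::finite \<Rightarrow> 'a::finite \<Rightarrow> 's \<Rightarrow> real) \<Rightarrow> 's \<Rightarrow> 's set \<Rightarrow> ('s \<Rightarrow> 'a \<Rightarrow> real) \<Rightarrow> real
    \<Rightarrow> ('s \<Rightarrow> 'a \<Rightarrow> real) \<Rightarrow> ('s \<Rightarrow> real) \<Rightarrow> real \<Rightarrow> bool" where
  "nlp_feasible P sI B \<sigma>h \<beta> x xB \<delta> \<longleftrightarrow>
     0 \<le> \<delta> \<and> \<delta> \<le> 1 \<and>
     (\<forall>s\<in>S_r P B. \<forall>a. 0 \<le> x s a) \<and>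
     (\<forall>s\<in>B. 0 \<le> xB s \<and> xB s \<le> 1) \<and>
     (\<forall>s\<in>S_r P B. (\<Sum>a\<in>UNIV. x s a) = inflow P B sI x s) \<and>
     (\<forall>s\<in>B. xB s = inflow P B sI x s) \<and>
     (\<Sum>s\<in>B. xB s) \<ge> \<beta> \<and>
     (\<forall>s\<in>S_r P B. \<forall>a. \<bar>x s a - (\<Sum>a'\<in>UNIV. x s a') * \<sigma>h s a\<bar> \<le> \<delta> * (\<Sum>a'\<in>UNIV. x s a'))"

text \<open>Strategy recovered from an NLP solution; at states of S_r not visited, and
  outside S_r (where the choice does not influence the reachability of B), the
  human strategy is kept.\<close>
definition recovered :: "('s::finite \<Rightarrow> 'a::finite \<Rightarrow> 's \<Rightarrow> real) \<Rightarrow> 's set \<Rightarrow> ('s \<Rightarrow> 'a \<Rightarrow> real)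
    \<Rightarrow> ('s \<Rightarrow> 'a \<Rightarrow> real) \<Rightarrow> 's \<Rightarrow> 'a \<Rightarrow> real" where
  "recovered P B \<sigma>h x s a =
     (if s \<in> S_r P B \<and> (\<Sum>a'\<in>UNIV. x s a') > 0 then x s a / (\<Sum>a'\<in>UNIV. x s a') else \<sigma>h s a)"

end

theory Submission
  imports Defs
begin

lemma strat_le1:
  assumes "is_strategy \<sigma>" shows "\<sigma> s a \<le> 1"
proof -
  have "\<sigma> s a \<le> (\<Sum>b\<in>UNIV. \<sigma> s b)"
    by (rule member_le_sum) (use assms in \<open>auto simp: is_strategy_def\<close>)
  thus ?thesis using assms by (simp add: is_strategy_def)
qed

lemma induced_nonneg:
  assumes "is_mdp P" "is_strategy \<sigma>" shows "0 \<le> induced P \<sigma> s t"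
  using assms unfolding induced_def is_mdp_def is_strategy_def
  by (intro sum_nonneg) auto

lemma induced_sum:
  assumes "is_mdp P" "is_strategy \<sigma>" shows "(\<Sum>t\<in>UNIV. induced P \<sigma> s t) = 1"
proof -
  have "(\<Sum>t\<in>UNIV. induced P \<sigma> s t) = (\<Sum>a\<in>UNIV. \<sigma> s a * (\<Sum>t\<in>UNIV. P s a t))"
    unfolding induced_def by (subst sum.swap) (simp add: sum_distrib_left)
  also have "\<dots> = 1" using assms by (simp add: is_mdp_def is_strategy_def)
  finally show ?thesis .
qed

lemma induced_sum_le:
  assumes "is_mdp P" "is_strategy \<sigma>" shows "(\<Sum>t\<in>T. induced P \<sigma> s t) \<le> 1"
proof -
  have "(\<Sum>t\<in>T. induced P \<sigma> s t) \<le> (\<Sum>t\<in>UNIV. induced P \<sigma> s t)"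
    by (rule sum_mono2) (auto intro: induced_nonneg[OF assms])
  thus ?thesis using induced_sum[OF assms] by simp
qed

lemma reach_n_bounds:
  assumes "is_mdp P" "is_strategy \<sigma>"
  shows "0 \<le> reach_n P B \<sigma> n s \<and> reach_n P B \<sigma> n s \<le> 1"
proof (induction n arbitrary: s)
  case 0 then show ?case by simp
next
  case (Suc n)
  have "(\<Sum>t\<in>UNIV. induced P \<sigma> s t * reach_n P B \<sigma> n t) \<le> (\<Sum>t\<in>UNIV. induced P \<sigma> s t)"
    by (intro sum_mono mult_right_le_one_le) (auto simp: Suc induced_nonneg[OF assms])
  moreover have "0 \<le> (\<Sum>t\<in>UNIV. induced P \<sigma> s t * reach_n P B \<sigma> n t)"
    by (intro sum_nonneg mult_nonneg_nonneg) (auto simp: Suc induced_nonneg[OF assms])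
  ultimately show ?case using induced_sum[OF assms] by auto
qed

lemma reach_bdd:
  assumes "is_mdp P" "is_strategy \<sigma>"
  shows "bdd_above (range (\<lambda>n. reach_n P B \<sigma> n s))"
  using reach_n_bounds[OF assms] by (intro bdd_aboveI[of _ 1]) auto

lemma reach_n_le_prob:
  assumes "is_mdp P" "is_strategy \<sigma>"
  shows "reach_n P B \<sigma> n s \<le> reach_prob P B \<sigma> s"
  unfolding reach_prob_def by (rule cSUP_upper[OF _ reach_bdd[OF assms]]) auto

lemma reach_prob_nonneg:
  assumes "is_mdp P" "is_strategy \<sigma>"
  shows "0 \<le> reach_prob P B \<sigma> s"
  using reach_n_le_prob[OF assms, of B 0 s] reach_n_bounds[OF assms, of B 0 s] by linarith

lemma reach_prob_le1:
  assumes "is_mdp P" "is_strategy \<sigma>"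
  shows "reach_prob P B \<sigma> s \<le> 1"
  unfolding reach_prob_def by (rule cSUP_least) (use reach_n_bounds[OF assms] in auto)

lemma reach_prob_zero:
  assumes "is_mdp P" "is_strategy \<sigma>" "reach_prob P B \<sigma> s \<le> 0"
  shows "reach_n P B \<sigma> n s = 0"
  using reach_n_le_prob[OF assms(1,2), of B n s] reach_n_bounds[OF assms(1,2), of B n s] assms(3)
  by linarith

lemma reach_prob_pos:
  assumes "0 < reach_prob P B \<sigma> s"
  shows "\<exists>n. 0 < reach_n P B \<sigma> n s"
proof (rule ccontr)
  assume "\<not> ?thesis"
  hence "reach_prob P B \<sigma> s \<le> 0" unfolding reach_prob_def
    by (intro cSUP_least) (auto simp: not_less)
  thus False using assms by simp
qed

lemma reach_prob_B:
  assumes "is_mdp P" "is_strategy \<sigma>" "s \<in> B"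
  shows "reach_prob P B \<sigma> s = 1"
  using reach_n_le_prob[OF assms(1,2), of B 0 s] reach_prob_le1[OF assms(1,2), of B s] assms(3)
  by simp


lemma S_r_notB: "s \<in> S_r P B \<Longrightarrow> s \<notin> B"
  by (simp add: S_r_def)

lemma recovered_strategy:
  assumes hum: "is_strategy \<sigma>h" and xnn: "\<forall>s\<in>S_r P B. \<forall>a. 0 \<le> x s a"
  shows "is_strategy (recovered P B \<sigma>h x)"
  unfolding is_strategy_def
proof safe
  fix s a show "0 \<le> recovered P B \<sigma>h x s a"
    using hum xnn unfolding recovered_def is_strategy_def by auto
next
  fix s show "(\<Sum>a\<in>UNIV. recovered P B \<sigma>h x s a) = 1"
  proof (cases "s \<in> S_r P B \<and> (\<Sum>a'\<in>UNIV. x s a') > 0")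
    case True
    then show ?thesis unfolding recovered_def by (simp add: sum_divide_distrib[symmetric])
  next
    case False
    hence "\<forall>a. recovered P B \<sigma>h x s a = \<sigma>h s a" unfolding recovered_def by auto
    then show ?thesis using hum unfolding is_strategy_def by simp
  qed
qed

lemma recovered_flow:
  assumes "s \<in> S_r P B" "\<forall>a. 0 \<le> x s a"
  shows "(\<Sum>a\<in>UNIV. P s a t * x s a) = induced P (recovered P B \<sigma>h x) s t * (\<Sum>a\<in>UNIV. x s a)"
proof (cases "(\<Sum>a\<in>UNIV. x s a) > 0")
  case True
  hence r: "\<forall>a. recovered P B \<sigma>h x s a = x s a / (\<Sum>a\<in>UNIV. x s a)"
    using assms unfolding recovered_def by auto
  have "induced P (recovered P B \<sigma>h x) s t * (\<Sum>a\<in>UNIV. x s a)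
     = (\<Sum>a\<in>UNIV. recovered P B \<sigma>h x s a * P s a t * (\<Sum>a\<in>UNIV. x s a))"
    unfolding induced_def by (simp add: sum_distrib_right)
  also have "\<dots> = (\<Sum>a\<in>UNIV. P s a t * x s a)" using True r by (intro sum.cong) auto
  finally show ?thesis by simp
next
  case False
  hence "(\<Sum>a\<in>UNIV. x s a) = 0" using assms(2) by (meson not_less sum_nonneg antisym)
  hence "\<forall>a. x s a = 0" using assms(2) by (simp add: sum_nonneg_eq_0_iff)
  then show ?thesis by simp
qed

lemma recovered_dev:
  assumes "nlp_feasible P sI B \<sigma>h \<beta> x xB \<delta>"
  shows "deviation \<sigma>h (recovered P B \<sigma>h x) \<le> \<delta>"
  unfolding deviation_def
proof (subst Max_le_iff, simp, simp, safe)
  fix s a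
  have d0: "0 \<le> \<delta>" using assms by (simp add: nlp_feasible_def)
  show "\<bar>\<sigma>h s a - recovered P B \<sigma>h x s a\<bar> \<le> \<delta>"
  proof (cases "s \<in> S_r P B \<and> (\<Sum>a'\<in>UNIV. x s a') > 0")
    case True
    let ?y = "\<Sum>a'\<in>UNIV. x s a'"
    have iv: "\<bar>x s a - ?y * \<sigma>h s a\<bar> \<le> \<delta> * ?y" using assms True unfolding nlp_feasible_def by blast
    have "\<bar>\<sigma>h s a - x s a / ?y\<bar> = \<bar>x s a - ?y * \<sigma>h s a\<bar> / ?y"
      using True by (simp add: field_simps abs_div_pos[symmetric] abs_minus_commute)
    also have "\<dots> \<le> \<delta>" using True iv by (simp add: divide_le_eq)
    finally show ?thesis using True unfolding recovered_def by simp
  next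
    case False
    hence "recovered P B \<sigma>h x s a = \<sigma>h s a" unfolding recovered_def by auto
    then show ?thesis using d0 by simp
  qed
qed


lemma reach_n_B: "s \<in> B \<Longrightarrow> reach_n P B \<sigma> n s = 1"
  by (cases n) auto

lemma recovered_reach:
  assumes mdp: "is_mdp P" and hum: "is_strategy \<sigma>h"
    and feas: "nlp_feasible P sI B \<sigma>h \<beta> x xB \<delta>"
  shows "\<beta> \<le> reach_prob P B (recovered P B \<sigma>h x) sI"
proof -
  define \<sigma> where "\<sigma> = recovered P B \<sigma>h x"
  define S where "S = S_r P B"
  define y where "y s = (\<Sum>a\<in>UNIV. x s a)" for s
  define h where "h n s = reach_n P B \<sigma> n s" for n s
  define r where "r = reach_prob P B \<sigma> sI"
  define \<alpha> where "\<alpha> t = (if t = sI then 1 else (0::real))" for t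
  define F where "F t = (\<Sum>s\<in>S. induced P \<sigma> s t * y s)" for t
  define X where "X = (\<Sum>t\<in>B. xB t)"
  define D where "D n = (\<Sum>s\<in>S. y s * h n s)" for n
  define Y where "Y = (\<Sum>s\<in>S. y s)"
  have xnn: "\<forall>s\<in>S. \<forall>a. 0 \<le> x s a" using feas by (simp add: nlp_feasible_def S_def)
  have strat: "is_strategy \<sigma>" unfolding \<sigma>_def
    by (rule recovered_strategy[OF hum]) (use xnn in \<open>simp add: S_def\<close>)
  have ynn: "0 \<le> y s" if "s \<in> S" for s using xnn that by (simp add: y_def sum_nonneg)
  have hb: "0 \<le> h n s \<and> h n s \<le> 1" for n s unfolding h_def by (rule reach_n_bounds[OF mdp strat])
  have hr: "h n sI \<le> r" for n unfolding h_def r_def by (rule reach_n_le_prob[OF mdp strat])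
  have r1: "r \<le> 1" unfolding r_def by (rule reach_prob_le1[OF mdp strat])
  have r0: "0 \<le> r" unfolding r_def by (rule reach_prob_nonneg[OF mdp strat])
  have inflowF: "inflow P B sI x t = F t + \<alpha> t" for t
  proof -
    have "(\<Sum>s'\<in>S_r P B. \<Sum>a\<in>UNIV. P s' a t * x s' a) = F t"
      unfolding F_def S_def y_def \<sigma>_def
      by (intro sum.cong refl recovered_flow) (use xnn in \<open>auto simp: S_def\<close>)
    thus ?thesis unfolding inflow_def \<alpha>_def by simp
  qed
  have flowS: "y t = F t + \<alpha> t" if "t \<in> S" for t
    using feas that inflowF unfolding nlp_feasible_def S_def y_def by metis
  have flowB: "xB t = F t + \<alpha> t" if "t \<in> B" for t
    using feas that inflowF unfolding nlp_feasible_def by metis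
  have Fnn: "0 \<le> F t" for t unfolding F_def
    by (intro sum_nonneg mult_nonneg_nonneg induced_nonneg[OF mdp strat] ynn)
  have disj: "S \<inter> B = {}" by (auto simp: S_def S_r_def)
  have Aler: "(\<Sum>t\<in>S. h n t * \<alpha> t) + (\<Sum>t\<in>B. \<alpha> t) \<le> r" for n
  proof -
    have e1: "(\<Sum>t\<in>S. h n t * \<alpha> t) = (if sI \<in> S then h n sI else 0)"
      unfolding \<alpha>_def by (simp add: if_distrib cong: if_cong)
    have e2: "(\<Sum>t\<in>B. \<alpha> t) = (if sI \<in> B then 1 else 0)"
      unfolding \<alpha>_def by simp
    have "sI \<in> B \<Longrightarrow> r = 1" unfolding r_def by (rule reach_prob_B[OF mdp strat])
    thus ?thesis using e1 e2 disj hr r0 by auto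
  qed
  have step: "D n + X - r \<le> D (Suc n)" for n
  proof -
    have "D (Suc n) = (\<Sum>s\<in>S. y s * (\<Sum>t\<in>UNIV. induced P \<sigma> s t * h n t))"
      unfolding D_def h_def by (intro sum.cong refl) (auto simp: S_def S_r_def)
    also have "\<dots> = (\<Sum>t\<in>UNIV. h n t * F t)"
      unfolding F_def by (simp add: sum_distrib_left sum_distrib_right mult_ac sum.swap[of _ S])
    also have "\<dots> \<ge> (\<Sum>t\<in>S \<union> B. h n t * F t)"
      by (rule sum_mono2) (use hb Fnn in auto)
    also have "(\<Sum>t\<in>S \<union> B. h n t * F t) = (\<Sum>t\<in>S. h n t * F t) + (\<Sum>t\<in>B. h n t * F t)"
      by (rule sum.union_disjoint) (use disj in auto)
    also have "(\<Sum>t\<in>S. h n t * F t) = D n - (\<Sum>t\<in>S. h n t * \<alpha> t)"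
      unfolding D_def by (simp add: flowS algebra_simps sum_subtractf sum.distrib cong: sum.cong)
    also have "(\<Sum>t\<in>B. h n t * F t) = X - (\<Sum>t\<in>B. \<alpha> t)"
    proof -
      have "(\<Sum>t\<in>B. h n t * F t) = (\<Sum>t\<in>B. xB t - \<alpha> t)"
        by (intro sum.cong refl) (simp add: flowB h_def reach_n_B)
      thus ?thesis unfolding X_def by (simp add: sum_subtractf)
    qed
    finally show ?thesis using Aler[of n] by linarith
  qed
  have lin: "real n * (X - r) \<le> D n" for n
  proof (induction n)
    case 0
    show ?case unfolding D_def using ynn hb by (simp add: sum_nonneg)
  next
    case (Suc n)
    then show ?case using step[of n] by (simp add: algebra_simps)
  qed
  have DY: "D n \<le> Y" for n
    unfolding D_def Y_def by (intro sum_mono mult_right_le_one_le) (use ynn hb in auto)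
  have "X \<le> r"
  proof (rule ccontr)
    assume "\<not> X \<le> r"
    then obtain n where "Y < real n * (X - r)" using reals_Archimedean3[of "X - r"] by auto
    thus False using lin[of n] DY[of n] by linarith
  qed
  moreover have "\<beta> \<le> X" using feas unfolding nlp_feasible_def X_def by blast
  ultimately show ?thesis unfolding r_def \<sigma>_def by simp
qed


lemma reach_mono_strat:
  assumes mdp: "is_mdp P" and s1: "is_strategy \<sigma>" and s2: "is_strategy \<sigma>'"
    and same: "\<And>s. s \<notin> B \<Longrightarrow> reach_prob P B \<sigma> s \<noteq> 0 \<Longrightarrow> \<sigma>' s = \<sigma> s"
  shows "reach_n P B \<sigma> n s \<le> reach_n P B \<sigma>' n s"
proof (induction n arbitrary: s)
  case 0 then show ?case by simp
next
  case (Suc n)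
  show ?case
  proof (cases "s \<in> B")
    case True then show ?thesis by simp
  next
    case nB: False
    show ?thesis
    proof (cases "reach_prob P B \<sigma> s = 0")
      case True
      hence "reach_n P B \<sigma> (Suc n) s = 0" by (intro reach_prob_zero[OF mdp s1]) simp
      then show ?thesis using reach_n_bounds[OF mdp s2, of B "Suc n" s] by simp
    next
      case False
      hence eq: "induced P \<sigma>' s = induced P \<sigma> s" using same nB unfolding induced_def by auto
      have "(\<Sum>t\<in>UNIV. induced P \<sigma> s t * reach_n P B \<sigma> n t)
          \<le> (\<Sum>t\<in>UNIV. induced P \<sigma> s t * reach_n P B \<sigma>' n t)"
        by (intro sum_mono mult_left_mono Suc.IH induced_nonneg[OF mdp s1])
      then show ?thesis using nB eq by simp
    qed
  qed
qed

lemma reach_prob_mono_strat: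
  assumes mdp: "is_mdp P" and s1: "is_strategy \<sigma>" and s2: "is_strategy \<sigma>'"
    and same: "\<And>s. s \<notin> B \<Longrightarrow> reach_prob P B \<sigma> s \<noteq> 0 \<Longrightarrow> \<sigma>' s = \<sigma> s"
  shows "reach_prob P B \<sigma> s \<le> reach_prob P B \<sigma>' s"
  unfolding reach_prob_def[of P B \<sigma>]
proof (rule cSUP_least, simp)
  fix n show "reach_n P B \<sigma> n s \<le> reach_prob P B \<sigma>' s"
    using reach_mono_strat[OF assms] reach_n_le_prob[OF mdp s2] by (meson order_trans)
qed

lemma closed_zero:
  assumes mdp: "is_mdp P" and st: "is_strategy \<rho>"
    and closed: "\<And>s a t. s \<in> V \<Longrightarrow> 0 < P s a t \<Longrightarrow> t \<in> V" and VB: "V \<inter> B = {}"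
  shows "s \<in> V \<Longrightarrow> reach_n P B \<rho> n s = 0"
proof (induction n arbitrary: s)
  case 0 then show ?case using VB by auto
next
  case (Suc n)
  have z: "induced P \<rho> s t * reach_n P B \<rho> n t = 0" for t
  proof (cases "t \<in> V")
    case True then show ?thesis using Suc.IH by simp
  next
    case False
    have "P s a t = 0" for a
    proof -
      have "\<not> 0 < P s a t" using closed[OF Suc.prems] False by blast
      moreover have "0 \<le> P s a t" using mdp by (simp add: is_mdp_def)
      ultimately show ?thesis by simp
    qed
    then show ?thesis unfolding induced_def by simp
  qed
  have "s \<notin> B" using Suc.prems VB by auto
  then show ?case by (simp add: z)
qed

lemma perturb:
  fixes \<sigma> :: "'s::finite \<Rightarrow> 'a::finite \<Rightarrow> real"
  assumes mdp: "is_mdp P" and strat: "is_strategy \<sigma>" and e0: "0 < \<epsilon>" and e1: "\<epsilon> \<le> 1"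
  shows "\<exists>\<sigma>'. is_strategy \<sigma>' \<and> (\<forall>s a. \<bar>\<sigma>' s a - \<sigma> s a\<bar> \<le> \<epsilon>)
     \<and> reach_prob P B \<sigma> sI \<le> reach_prob P B \<sigma>' sI \<and> (\<forall>s\<in>S_r P B. 0 < reach_prob P B \<sigma>' s)"
proof -
  define Z where "Z = {s. s \<notin> B \<and> reach_prob P B \<sigma> s = 0}"
  define c where "c = \<epsilon> / real (card (UNIV::'a set))"
  define \<sigma>' where "\<sigma>' s a = (if s \<in> Z then (1 - \<epsilon>) * \<sigma> s a + c else \<sigma> s a)" for s a
  have c0: "0 < c" unfolding c_def using e0 finite_UNIV_card_ge_0[where 'a='a] by simp
  have cs: "(\<Sum>a\<in>(UNIV::'a set). c) = \<epsilon>" unfolding c_def by simp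
  have sle: "0 \<le> \<sigma> s a \<and> \<sigma> s a \<le> 1" for s a using strat strat_le1[OF strat] by (auto simp: is_strategy_def)
  have cg: "1 \<le> real (card (UNIV::'a set))" using finite_UNIV_card_ge_0[where 'a='a] by simp
  have cle: "c \<le> \<epsilon>"
  proof -
    have "\<epsilon> * 1 \<le> \<epsilon> * real (card (UNIV::'a set))" using cg e0 by (intro mult_left_mono) auto
    thus ?thesis using cg by (simp add: c_def divide_le_eq)
  qed
  have c1: "c \<le> 1" using cle e1 by simp
  have st': "is_strategy \<sigma>'" unfolding is_strategy_def
  proof safe
    fix s a show "0 \<le> \<sigma>' s a" unfolding \<sigma>'_def using sle[of s a] c0 e1 by auto
  next
    fix s show "(\<Sum>a\<in>UNIV. \<sigma>' s a) = 1"
    proof (cases "s \<in> Z")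
      case True
      have "(\<Sum>a\<in>UNIV. \<sigma>' s a) = (1 - \<epsilon>) * (\<Sum>a\<in>UNIV. \<sigma> s a) + (\<Sum>a\<in>(UNIV::'a set). c)"
        unfolding \<sigma>'_def using True by (simp add: sum.distrib sum_distrib_left)
      then show ?thesis using strat cs by (simp add: is_strategy_def)
    next
      case False then show ?thesis using strat by (simp add: \<sigma>'_def is_strategy_def)
    qed
  qed
  have dev: "\<bar>\<sigma>' s a - \<sigma> s a\<bar> \<le> \<epsilon>" for s a
  proof (cases "s \<in> Z")
    case True
    have "\<sigma>' s a - \<sigma> s a = c - \<epsilon> * \<sigma> s a" unfolding \<sigma>'_def using True by (simp add: algebra_simps)
    moreover have "\<epsilon> * \<sigma> s a \<le> \<epsilon>" using sle[of s a] e0 by (simp add: mult_left_le)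
    moreover note cle
    ultimately show ?thesis using c0 sle[of s a] e0 mult_nonneg_nonneg[of \<epsilon> "\<sigma> s a"] unfolding abs_le_iff by linarith
  next
    case False then show ?thesis using e0 by (simp add: \<sigma>'_def)
  qed
  have same: "\<sigma>' s = \<sigma> s" if "s \<notin> B" "reach_prob P B \<sigma> s \<noteq> 0" for s
    using that by (auto simp: \<sigma>'_def Z_def)
  have mono: "reach_prob P B \<sigma> s \<le> reach_prob P B \<sigma>' s" for s
    by (rule reach_prob_mono_strat[OF mdp strat st' same])
  define V where "V = {s. s \<notin> B \<and> reach_prob P B \<sigma>' s = 0}"
  have VZ: "V \<subseteq> Z"
  proof
    fix s assume "s \<in> V"
    thus "s \<in> Z" using mono[of s] reach_prob_nonneg[OF mdp strat, of B s] by (auto simp: V_def Z_def)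
  qed
  have closed: "t \<in> V" if sV: "s \<in> V" and pos: "0 < P s a t" for s a t
  proof -
    have sZ: "s \<in> Z" using VZ sV by auto
    have "c \<le> \<sigma>' s a" unfolding \<sigma>'_def using sZ sle[of s a] e1 by simp
    hence spos: "0 < \<sigma>' s a" using c0 by linarith
    have Mpos: "0 < induced P \<sigma>' s t"
    proof -
      have "\<sigma>' s a * P s a t \<le> induced P \<sigma>' s t" unfolding induced_def
        by (rule member_le_sum[of a UNIV "\<lambda>a. \<sigma>' s a * P s a t"])
           (use st' mdp in \<open>auto simp: is_strategy_def is_mdp_def\<close>)
      moreover have "0 < \<sigma>' s a * P s a t" using spos pos by simp
      ultimately show ?thesis by linarith
    qed
    have hz: "reach_n P B \<sigma>' n t = 0" for n
    proof -
      have sB: "s \<notin> B" and s0: "reach_prob P B \<sigma>' s \<le> 0" using sV by (auto simp: V_def)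
      have "reach_n P B \<sigma>' (Suc n) s = 0" by (rule reach_prob_zero[OF mdp st' s0])
      hence sum0: "(\<Sum>u\<in>UNIV. induced P \<sigma>' s u * reach_n P B \<sigma>' n u) = 0" using sB by simp
      have "\<forall>u\<in>UNIV. induced P \<sigma>' s u * reach_n P B \<sigma>' n u = 0"
        by (rule iffD1[OF sum_nonneg_eq_0_iff sum0])
           (auto intro!: mult_nonneg_nonneg induced_nonneg[OF mdp st'] simp: reach_n_bounds[OF mdp st'])
      hence "induced P \<sigma>' s t * reach_n P B \<sigma>' n t = 0" by simp
      hence "induced P \<sigma>' s t = 0 \<or> reach_n P B \<sigma>' n t = 0" by (rule iffD1[OF mult_eq_0_iff])
      moreover have "induced P \<sigma>' s t \<noteq> 0" using Mpos by (rule less_imp_neq[THEN not_sym])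
      ultimately show ?thesis by blast
    qed
    have tB: "t \<notin> B" using hz[of 0] by (auto split: if_splits)
    have "reach_prob P B \<sigma>' t \<le> 0" unfolding reach_prob_def
      by (rule cSUP_least) (auto simp: hz)
    thus ?thesis using tB reach_prob_nonneg[OF mdp st', of B t] by (simp add: V_def)
  qed
  have VB: "V \<inter> B = {}" by (auto simp: V_def)
  have pos: "0 < reach_prob P B \<sigma>' s" if sS: "s \<in> S_r P B" for s
  proof (rule ccontr)
    assume "\<not> ?thesis"
    hence sV: "s \<in> V" using sS reach_prob_nonneg[OF mdp st', of B s] by (auto simp: V_def S_r_def)
    obtain \<rho> where \<rho>: "is_strategy \<rho>" "0 < reach_prob P B \<rho> s" using sS by (auto simp: S_r_def)
    obtain n where "0 < reach_n P B \<rho> n s" using reach_prob_pos[OF \<rho>(2)] by auto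
    moreover have "reach_n P B \<rho> n s = 0"
      by (rule closed_zero[OF mdp \<rho>(1) closed VB sV])
    ultimately show False by simp
  qed
  show ?thesis using st' dev mono pos by blast
qed


fun Qp :: "('s::finite \<Rightarrow> 's \<Rightarrow> real) \<Rightarrow> 's set \<Rightarrow> nat \<Rightarrow> 's \<Rightarrow> 's \<Rightarrow> real" where
  "Qp M T 0 s u = (if s = u then 1 else 0)"
| "Qp M T (Suc n) s u = (\<Sum>t\<in>T. M s t * Qp M T n t u)"

definition stay :: "('s::finite \<Rightarrow> 's \<Rightarrow> real) \<Rightarrow> 's set \<Rightarrow> nat \<Rightarrow> 's \<Rightarrow> real" where
  "stay M T n s = (\<Sum>u\<in>T. Qp M T n s u)"

lemma sum_lessThan_split: "(\<Sum>n<N+K. f n) = (\<Sum>n<N. f n) + (\<Sum>n<K. f (N + n)) " for f :: "nat \<Rightarrow> real"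
  by (induction K) (simp_all add: add.assoc)

lemma sum_delta_l: "s \<in> T \<Longrightarrow> finite T \<Longrightarrow> (\<Sum>t\<in>T. (if s = t then 1 else 0) * f t) = (f s :: real)"
proof -
  assume a: "s \<in> T" "finite T"
  have "(\<Sum>t\<in>T. (if s = t then 1 else 0) * f t) = (\<Sum>t\<in>T. if s = t then f t else 0)"
    by (rule sum.cong) auto
  thus ?thesis using a by simp
qed

lemma sum_delta_r: "s \<in> T \<Longrightarrow> finite T \<Longrightarrow> (\<Sum>t\<in>T. f t * (if t = s then 1 else 0)) = (f s :: real)"
proof -
  assume a: "s \<in> T" "finite T"
  have "(\<Sum>t\<in>T. f t * (if t = s then 1 else 0)) = (\<Sum>t\<in>T. if s = t then f t else 0)"
    by (rule sum.cong) auto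
  thus ?thesis using a by simp
qed

lemma Qp_nonneg: assumes "\<forall>s t. 0 \<le> M s t" shows "0 \<le> Qp M T n s u"
  by (induction n arbitrary: s) (auto intro!: sum_nonneg mult_nonneg_nonneg simp: assms)

lemma Qp_add:
  assumes "s \<in> T"
  shows "Qp M T (n + m) s u = (\<Sum>t\<in>T. Qp M T n s t * Qp M T m t u)"
  using assms
proof (induction n arbitrary: s)
  case 0
  then show ?case by (simp add: sum_delta_l)
next
  case (Suc n)
  have "Qp M T (Suc n + m) s u = (\<Sum>t'\<in>T. M s t' * Qp M T (n + m) t' u)" by simp
  also have "\<dots> = (\<Sum>t'\<in>T. M s t' * (\<Sum>t\<in>T. Qp M T n t' t * Qp M T m t u))"
    by (intro sum.cong refl) (simp add: Suc.IH)
  also have "\<dots> = (\<Sum>t'\<in>T. \<Sum>t\<in>T. M s t' * (Qp M T n t' t * Qp M T m t u))"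
    by (simp only: sum_distrib_left)
  also have "\<dots> = (\<Sum>t\<in>T. \<Sum>t'\<in>T. M s t' * (Qp M T n t' t * Qp M T m t u))"
    by (rule sum.swap)
  also have "\<dots> = (\<Sum>t\<in>T. (\<Sum>t'\<in>T. M s t' * Qp M T n t' t) * Qp M T m t u)"
    by (simp only: sum_distrib_right mult.assoc)
  finally show ?case by simp
qed

lemma Qp_one: "u \<in> T \<Longrightarrow> Qp M T 1 t u = M t u"
  by (simp add: sum_delta_r)

lemma stay_Suc: "stay M T (Suc n) s = (\<Sum>t\<in>T. M s t * stay M T n t)"
proof -
  have "stay M T (Suc n) s = (\<Sum>u\<in>T. \<Sum>t\<in>T. M s t * Qp M T n t u)" by (simp add: stay_def)
  also have "\<dots> = (\<Sum>t\<in>T. \<Sum>u\<in>T. M s t * Qp M T n t u)" by (rule sum.swap)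
  also have "\<dots> = (\<Sum>t\<in>T. M s t * stay M T n t)" by (simp only: stay_def sum_distrib_left)
  finally show ?thesis .
qed

lemma stay_nonneg: assumes "\<forall>s t. 0 \<le> M s t" shows "0 \<le> stay M T n s"
  unfolding stay_def by (intro sum_nonneg Qp_nonneg assms)

lemma stay_le1:
  assumes nn: "\<forall>s t. 0 \<le> M s t" and row: "\<forall>s. (\<Sum>t\<in>T. M s t) \<le> 1"
  shows "stay M T n s \<le> 1"
proof (induction n arbitrary: s)
  case 0 then show ?case by (simp add: stay_def)
next
  case (Suc n)
  have "stay M T (Suc n) s \<le> (\<Sum>t\<in>T. M s t)" unfolding stay_Suc
    by (intro sum_mono mult_right_le_one_le) (auto simp: nn Suc stay_nonneg)
  then show ?case using row[rule_format, of s] by linarith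
qed

lemma stay_add:
  assumes "s \<in> T"
  shows "stay M T (n + m) s = (\<Sum>t\<in>T. Qp M T n s t * stay M T m t)"
proof -
  have "stay M T (n + m) s = (\<Sum>u\<in>T. \<Sum>t\<in>T. Qp M T n s t * Qp M T m t u)"
    by (simp add: stay_def Qp_add[OF assms])
  also have "\<dots> = (\<Sum>t\<in>T. \<Sum>u\<in>T. Qp M T n s t * Qp M T m t u)" by (rule sum.swap)
  also have "\<dots> = (\<Sum>t\<in>T. Qp M T n s t * stay M T m t)" by (simp only: stay_def sum_distrib_left)
  finally show ?thesis .
qed

lemma stay_antimono:
  assumes nn: "\<forall>s t. 0 \<le> M s t" and row: "\<forall>s. (\<Sum>t\<in>T. M s t) \<le> 1" and sT: "s \<in> T"
  shows "stay M T (Suc n) s \<le> stay M T n s"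
proof -
  have "stay M T (Suc n) s = (\<Sum>t\<in>T. Qp M T n s t * stay M T 1 t)"
    using stay_add[OF sT, where n=n and m=1 and M=M] by simp
  also have "\<dots> \<le> (\<Sum>t\<in>T. Qp M T n s t)"
    by (intro sum_mono mult_right_le_one_le Qp_nonneg stay_nonneg stay_le1 nn row)
  finally show ?thesis by (simp add: stay_def)
qed

lemma stay_mono_le:
  assumes nn: "\<forall>s t. 0 \<le> M s t" and row: "\<forall>s. (\<Sum>t\<in>T. M s t) \<le> 1" and sT: "s \<in> T"
    and "n \<le> m"
  shows "stay M T m s \<le> stay M T n s"
  using lift_Suc_antimono_le[of "\<lambda>n. stay M T n s", OF stay_antimono[OF nn row sT] assms(4)] .

lemma stay_bounded:
  assumes nn: "\<forall>s t. 0 \<le> M s t" and row: "\<forall>s. (\<Sum>t\<in>T. M s t) \<le> 1"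
    and leave: "\<forall>s\<in>T. \<exists>n. stay M T n s < 1"
  shows "\<exists>C. \<forall>K. \<forall>s\<in>T. (\<Sum>n<K. stay M T n s) \<le> C"
proof (cases "T = {}")
  case True then show ?thesis by auto
next
  case Tne: False
  define ns where "ns s = (SOME n. stay M T n s < 1)" for s
  have ns: "stay M T (ns s) s < 1" if "s \<in> T" for s
  proof -
    have "\<exists>n. stay M T n s < 1" using leave that by blast
    thus ?thesis unfolding ns_def by (rule someI_ex)
  qed
  define N where "N = Max (ns ` T)"
  have fin: "finite T" by simp
  have nsN: "ns s \<le> N" if "s \<in> T" for s unfolding N_def by (rule Max_ge) (simp_all add: that)
  define \<rho> where "\<rho> = Max ((\<lambda>s. stay M T N s) ` T)"
  have stN: "stay M T N s \<le> \<rho>" if "s \<in> T" for s unfolding \<rho>_def by (rule Max_ge) (simp_all add: that)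
  have \<rho>1: "\<rho> < 1"
  proof -
    have "\<rho> \<in> (\<lambda>s. stay M T N s) ` T" unfolding \<rho>_def by (rule Max_in) (simp_all add: Tne)
    then obtain s where sT: "s \<in> T" and "\<rho> = stay M T N s" by auto
    thus ?thesis using stay_mono_le[OF nn row sT nsN[OF sT]] ns[OF sT] by linarith
  qed
  have \<rho>0: "0 \<le> \<rho>"
  proof -
    obtain s where "s \<in> T" using Tne by auto
    thus ?thesis using stN stay_nonneg[OF nn, where T=T and n=N and s=s] by fastforce
  qed
  have N0: "0 < N"
  proof (rule ccontr)
    assume "\<not> 0 < N"
    hence "N = 0" by simp
    obtain s where sT: "s \<in> T" using Tne by auto
    have "stay M T 0 s = 1" using sT by (simp add: stay_def)
    thus False using stN[OF sT] \<rho>1 \<open>N = 0\<close> by simp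
  qed
  define C where "C = real N / (1 - \<rho>)"
  have CN: "real N + \<rho> * C = C" unfolding C_def using \<rho>1 by (simp add: field_simps)
  have C0: "0 \<le> C" unfolding C_def using \<rho>1 by simp
  have NC: "real N \<le> C" using CN mult_nonneg_nonneg[OF \<rho>0 C0] by linarith
  have main: "\<forall>s\<in>T. (\<Sum>n<K. stay M T n s) \<le> C" for K
  proof (induction K rule: less_induct)
    case (less K)
    show ?case
    proof (cases "K \<le> N")
      case True
      show ?thesis
      proof
        fix s assume "s \<in> T"
        have "(\<Sum>n<K. stay M T n s) \<le> (\<Sum>n<K. 1)"
          by (intro sum_mono stay_le1 nn row)
        also have "\<dots> = real K" by simp
        finally show "(\<Sum>n<K. stay M T n s) \<le> C" using True NC by linarith
      qed
    next
      case False
      define K' where "K' = K - N"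
      have K: "K = N + K'" using False unfolding K'_def by simp
      have K'K: "K' < K" using K N0 by simp
      show ?thesis
      proof
        fix s assume sT: "s \<in> T"
        have "(\<Sum>n<K. stay M T n s) = (\<Sum>n<N. stay M T n s) + (\<Sum>n<K'. stay M T (N + n) s)"
          unfolding K by (rule sum_lessThan_split)
        also have "(\<Sum>n<N. stay M T n s) \<le> real N"
        proof -
          have "(\<Sum>n<N. stay M T n s) \<le> (\<Sum>n<N. 1)" by (intro sum_mono stay_le1 nn row)
          thus ?thesis by simp
        qed
        also have "(\<Sum>n<K'. stay M T (N + n) s) = (\<Sum>t\<in>T. Qp M T N s t * (\<Sum>n<K'. stay M T n t))"
        proof -
          have "(\<Sum>n<K'. stay M T (N + n) s) = (\<Sum>n<K'. \<Sum>t\<in>T. Qp M T N s t * stay M T n t)"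
            by (simp only: stay_add[OF sT])
          also have "\<dots> = (\<Sum>t\<in>T. \<Sum>n<K'. Qp M T N s t * stay M T n t)" by (rule sum.swap)
          also have "\<dots> = (\<Sum>t\<in>T. Qp M T N s t * (\<Sum>n<K'. stay M T n t))" by (simp only: sum_distrib_left)
          finally show ?thesis .
        qed
        also have "\<dots> \<le> (\<Sum>t\<in>T. Qp M T N s t * C)"
          by (intro sum_mono mult_left_mono Qp_nonneg nn) (use less.IH[OF K'K] in auto)
        also have "\<dots> = stay M T N s * C" by (simp add: stay_def sum_distrib_right)
        also have "\<dots> \<le> \<rho> * C" by (intro mult_right_mono stN sT C0)
        finally show "(\<Sum>n<K. stay M T n s) \<le> C" using CN by linarith
      qed
    qed
  qed
  thus ?thesis by blast
qed

lemma stay_summable: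
  assumes nn: "\<forall>s t. 0 \<le> M s t" and row: "\<forall>s. (\<Sum>t\<in>T. M s t) \<le> 1"
    and leave: "\<forall>s\<in>T. \<exists>n. stay M T n s < 1" and sT: "s \<in> T"
  shows "summable (\<lambda>n. stay M T n s)"
proof -
  obtain C where C: "\<forall>K. \<forall>s\<in>T. (\<Sum>n<K. stay M T n s) \<le> C" using stay_bounded[OF nn row leave] by blast
  show ?thesis
  proof (rule summableI_nonneg_bounded[of _ C])
    fix n show "0 \<le> stay M T n s" by (rule stay_nonneg[OF nn])
  next
    fix n show "(\<Sum>i<n. stay M T i s) \<le> C" using C sT by blast
  qed
qed

lemma Qp_summable:
  assumes nn: "\<forall>s t. 0 \<le> M s t" and row: "\<forall>s. (\<Sum>t\<in>T. M s t) \<le> 1"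
    and leave: "\<forall>s\<in>T. \<exists>n. stay M T n s < 1" and sT: "s \<in> T" and uT: "u \<in> T"
  shows "summable (\<lambda>n. Qp M T n s u)"
proof (rule summable_comparison_test'[OF stay_summable[OF nn row leave sT], where N=0])
  fix n
  have "Qp M T n s u \<le> stay M T n s" unfolding stay_def
    by (rule member_le_sum[OF uT]) (simp_all add: Qp_nonneg[OF nn])
  thus "norm (Qp M T n s u) \<le> stay M T n s" using Qp_nonneg[OF nn] by simp
qed


lemma sum_split_compl: fixes f :: "'s::finite \<Rightarrow> real"
  shows "sum f UNIV = sum f T + sum f (-T)"
proof -
  have "sum f (T \<union> -T) = sum f T + sum f (-T)" by (rule sum.union_disjoint) auto
  thus ?thesis by simp
qed

lemma dev_ge: "\<bar>\<sigma>h s a - \<sigma> s a\<bar> \<le> deviation \<sigma>h \<sigma>"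
proof -
  have "\<bar>\<sigma>h s a - \<sigma> s a\<bar> \<in> range (\<lambda>(s, a). \<bar>\<sigma>h s a - \<sigma> s a\<bar>)"
    by (rule rev_image_eqI[of "(s, a)"]) auto
  thus ?thesis unfolding deviation_def by (intro Max_ge) auto
qed

lemma dev_bounds:
  assumes "is_strategy \<sigma>h" "is_strategy \<sigma>"
  shows "0 \<le> deviation \<sigma>h \<sigma> \<and> deviation \<sigma>h \<sigma> \<le> 1"
proof
  show "0 \<le> deviation \<sigma>h \<sigma>" using dev_ge[of \<sigma>h undefined undefined \<sigma>] by linarith
  show "deviation \<sigma>h \<sigma> \<le> 1" unfolding deviation_def
  proof (subst Max_le_iff, simp, simp, safe)
    fix s a
    have "0 \<le> \<sigma>h s a" "\<sigma>h s a \<le> 1" "0 \<le> \<sigma> s a" "\<sigma> s a \<le> 1"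
      using assms strat_le1[OF assms(1)] strat_le1[OF assms(2)] by (auto simp: is_strategy_def)
    thus "\<bar>\<sigma>h s a - \<sigma> s a\<bar> \<le> 1" by linarith
  qed
qed

lemma stay_h:
  assumes mdp: "is_mdp P" and st: "is_strategy \<sigma>" and sT: "s \<in> S_r P B"
  shows "stay (induced P \<sigma>) (S_r P B) n s + reach_n P B \<sigma> n s \<le> 1"
  using sT
proof (induction n arbitrary: s)
  case 0
  then show ?case by (simp add: stay_def S_r_notB)
next
  case (Suc n)
  let ?M = "induced P \<sigma>" and ?T = "S_r P B" and ?h = "reach_n P B \<sigma> n"
  have nB: "s \<notin> B" using Suc.prems by (rule S_r_notB)
  have "stay ?M ?T (Suc n) s + reach_n P B \<sigma> (Suc n) s
      = (\<Sum>t\<in>?T. ?M s t * stay ?M ?T n t) + ((\<Sum>t\<in>?T. ?M s t * ?h t) + (\<Sum>t\<in>-?T. ?M s t * ?h t))"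
    using nB by (simp add: stay_Suc sum_split_compl[of _ ?T])
  also have "\<dots> = (\<Sum>t\<in>?T. ?M s t * (stay ?M ?T n t + ?h t)) + (\<Sum>t\<in>-?T. ?M s t * ?h t)"
    by (simp add: sum.distrib distrib_left)
  also have "\<dots> \<le> (\<Sum>t\<in>?T. ?M s t) + (\<Sum>t\<in>-?T. ?M s t)"
    by (intro add_mono sum_mono mult_right_le_one_le)
       (auto simp: Suc.IH induced_nonneg[OF mdp st] reach_n_bounds[OF mdp st] stay_nonneg)
  also have "\<dots> = 1" using induced_sum[OF mdp st, of s] sum_split_compl[of "?M s" ?T] by simp
  finally show ?case .
qed

lemma reach_zero_outside:
  assumes mdp: "is_mdp P" and st: "is_strategy \<sigma>" and t1: "t \<notin> S_r P B" and t2: "t \<notin> B"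
  shows "reach_n P B \<sigma> n t = 0"
proof -
  have "\<not> 0 < reach_prob P B \<sigma> t" using t1 t2 st by (auto simp: S_r_def)
  thus ?thesis by (intro reach_prob_zero[OF mdp st]) simp
qed

lemma reach_formula:
  assumes mdp: "is_mdp P" and st: "is_strategy \<sigma>" and sT: "s \<in> S_r P B"
  shows "reach_n P B \<sigma> n s
     = (\<Sum>k<n. \<Sum>s'\<in>S_r P B. Qp (induced P \<sigma>) (S_r P B) k s s' * (\<Sum>b\<in>B. induced P \<sigma> s' b))"
  using sT
proof (induction n arbitrary: s)
  case 0
  then show ?case by (simp add: S_r_notB)
next
  case (Suc n)
  let ?M = "induced P \<sigma>" and ?T = "S_r P B" and ?h = "reach_n P B \<sigma> n"
  let ?MB = "\<lambda>s'. \<Sum>b\<in>B. ?M s' b"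
  let ?g = "\<lambda>k. \<Sum>s'\<in>?T. Qp ?M ?T k s s' * ?MB s'"
  have nB: "s \<notin> B" using Suc.prems by (rule S_r_notB)
  have out: "(\<Sum>t\<in>-?T. ?M s t * ?h t) = ?MB s"
  proof -
    have "(\<Sum>t\<in>-?T. ?M s t * ?h t) = (\<Sum>t\<in>-?T. if t \<in> B then ?M s t else 0)"
      by (intro sum.cong refl) (auto simp: reach_n_B reach_zero_outside[OF mdp st])
    also have "\<dots> = (\<Sum>t\<in>-?T \<inter> B. ?M s t)" by (simp add: sum.inter_restrict)
    also have "-?T \<inter> B = B" by (auto simp: S_r_def)
    finally show ?thesis by simp
  qed
  have inn: "(\<Sum>t\<in>?T. ?M s t * ?h t) = (\<Sum>k<n. ?g (Suc k))"
  proof -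
    have "(\<Sum>t\<in>?T. ?M s t * ?h t)
        = (\<Sum>t\<in>?T. ?M s t * (\<Sum>k<n. \<Sum>s'\<in>?T. Qp ?M ?T k t s' * ?MB s'))"
      by (intro sum.cong refl) (simp add: Suc.IH)
    also have "\<dots> = (\<Sum>t\<in>?T. \<Sum>k<n. \<Sum>s'\<in>?T. ?M s t * (Qp ?M ?T k t s' * ?MB s'))"
      by (simp only: sum_distrib_left)
    also have "\<dots> = (\<Sum>k<n. \<Sum>t\<in>?T. \<Sum>s'\<in>?T. ?M s t * (Qp ?M ?T k t s' * ?MB s'))"
      by (rule sum.swap)
    also have "\<dots> = (\<Sum>k<n. \<Sum>s'\<in>?T. \<Sum>t\<in>?T. ?M s t * (Qp ?M ?T k t s' * ?MB s'))"
      by (intro sum.cong refl sum.swap)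
    also have "\<dots> = (\<Sum>k<n. ?g (Suc k))"
      by (simp only: Qp.simps sum_distrib_right mult.assoc)
    finally show ?thesis .
  qed
  have g0: "?g 0 = ?MB s" using Suc.prems by (simp add: sum_delta_l)
  have "reach_n P B \<sigma> (Suc n) s = (\<Sum>t\<in>?T. ?M s t * ?h t) + (\<Sum>t\<in>-?T. ?M s t * ?h t)"
    using nB by (simp add: sum_split_compl[of _ ?T])
  also have "\<dots> = ?g 0 + (\<Sum>k<n. ?g (Suc k))" using inn out g0 by simp
  also have "\<dots> = (\<Sum>k<Suc n. ?g k)" by (simp only: sum.lessThan_Suc_shift)
  finally show ?case .
qed


lemma construct_out:
  assumes mdp: "is_mdp P" and hum: "is_strategy \<sigma>h" and st: "is_strategy \<sigma>"
    and beta: "\<beta> \<le> reach_prob P B \<sigma> sI" and sI: "sI \<notin> S_r P B"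
  shows "\<exists>x xB. nlp_feasible P sI B \<sigma>h \<beta> x xB (deviation \<sigma>h \<sigma>)"
proof -
  define x where "x = (\<lambda>(s::'a) (a::'b). 0::real)"
  define xB where "xB s = (if s = sI then 1 else (0::real))" for s
  have infl: "inflow P B sI x s = xB s" for s by (simp add: inflow_def x_def xB_def)
  have sumB: "\<beta> \<le> (\<Sum>s\<in>B. xB s)"
  proof (cases "sI \<in> B")
    case True
    thus ?thesis using beta reach_prob_le1[OF mdp st, of B sI] by (simp add: xB_def)
  next
    case False
    have "\<not> 0 < reach_prob P B \<sigma> sI" using sI False st by (auto simp: S_r_def)
    thus ?thesis using beta False by (simp add: xB_def)
  qed
  show ?thesis
    unfolding nlp_feasible_def
    apply (rule exI[of _ x], rule exI[of _ xB])
    using dev_bounds[OF hum st] sumB sI by (auto simp: inflow_def x_def xB_def)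
qed

lemma construct_in:
  assumes mdp: "is_mdp P" and hum: "is_strategy \<sigma>h" and st: "is_strategy \<sigma>"
    and pos: "\<forall>s\<in>S_r P B. 0 < reach_prob P B \<sigma> s"
    and beta: "\<beta> \<le> reach_prob P B \<sigma> sI" and sI: "sI \<in> S_r P B"
  shows "\<exists>x xB. nlp_feasible P sI B \<sigma>h \<beta> x xB (deviation \<sigma>h \<sigma>)"
proof -
  define M where "M = induced P \<sigma>"
  define T where "T = S_r P B"
  define MB where "MB s' = (\<Sum>b\<in>B. M s' b)" for s'
  define y where "y s = (if s \<in> T then (\<Sum>n. Qp M T n sI s) else 0)" for s
  define x where "x s a = y s * \<sigma> s a" for s a
  define xB where "xB = inflow P B sI x"
  define \<alpha> where "\<alpha> t = (if t = sI then 1 else (0::real))" for t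
  define f where "f k = (\<Sum>s'\<in>T. Qp M T k sI s' * MB s')" for k
  have sIT: "sI \<in> T" using sI by (simp add: T_def)
  have nn: "\<forall>s t. 0 \<le> M s t" unfolding M_def using induced_nonneg[OF mdp st] by blast
  have row: "\<forall>s. (\<Sum>t\<in>T. M s t) \<le> 1" unfolding M_def using induced_sum_le[OF mdp st] by blast
  have leave: "\<forall>s\<in>T. \<exists>n. stay M T n s < 1"
  proof
    fix s assume sT: "s \<in> T"
    have "0 < reach_prob P B \<sigma> s" using pos sT by (simp add: T_def)
    then obtain n where "0 < reach_n P B \<sigma> n s" using reach_prob_pos by blast
    moreover have "stay M T n s + reach_n P B \<sigma> n s \<le> 1"
      unfolding M_def T_def by (rule stay_h[OF mdp st]) (use sT in \<open>simp add: T_def\<close>)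
    ultimately show "\<exists>n. stay M T n s < 1" by (intro exI[of _ n]) linarith
  qed
  have summ: "summable (\<lambda>n. Qp M T n sI s)" if "s \<in> T" for s
    by (rule Qp_summable[OF nn row leave sIT that])
  have ynn: "0 \<le> y s" for s unfolding y_def by (auto intro!: suminf_nonneg Qp_nonneg nn summ)
  have MBnn: "0 \<le> MB s" for s unfolding MB_def by (intro sum_nonneg) (simp add: nn)
  have Tdisj: "T \<inter> B = {}" by (auto simp: T_def S_r_def)
  have flow_y: "y s = \<alpha> s + (\<Sum>t\<in>T. y t * M t s)" if sT: "s \<in> T" for s
  proof -
    have ys: "y s = (\<Sum>n. Qp M T n sI s)" using sT by (simp add: y_def)
    have A: "(\<Sum>n. Qp M T (Suc n) sI s) = y s - Qp M T 0 sI s"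
      unfolding ys by (rule suminf_split_head[OF summ[OF sT]])
    have Bf: "(\<Sum>n. Qp M T (Suc n) sI s) = (\<Sum>t\<in>T. y t * M t s)"
    proof -
      have "Qp M T (Suc n) sI s = (\<Sum>t\<in>T. Qp M T n sI t * M t s)" for n
        using Qp_add[OF sIT, of M n 1 s] Qp_one[OF sT, of M] by simp
      hence "(\<Sum>n. Qp M T (Suc n) sI s) = (\<Sum>n. \<Sum>t\<in>T. Qp M T n sI t * M t s)" by simp
      also have "\<dots> = (\<Sum>t\<in>T. \<Sum>n. Qp M T n sI t * M t s)"
        by (rule suminf_sum) (intro summable_mult2 summ)
      also have "\<dots> = (\<Sum>t\<in>T. y t * M t s)"
        by (intro sum.cong refl) (simp add: y_def suminf_mult2 summ)
      finally show ?thesis .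
    qed
    have "Qp M T 0 sI s = \<alpha> s" by (simp add: \<alpha>_def)
    thus ?thesis using A Bf by linarith
  qed
  have inflow_eq: "inflow P B sI x s = (\<Sum>t\<in>T. y t * M t s) + \<alpha> s" for s
  proof -
    have "(\<Sum>s'\<in>S_r P B. \<Sum>a\<in>UNIV. P s' a s * x s' a) = (\<Sum>t\<in>T. y t * M t s)"
      unfolding T_def M_def induced_def x_def
      by (intro sum.cong refl) (simp add: sum_distrib_left mult_ac)
    thus ?thesis by (simp add: inflow_def \<alpha>_def)
  qed
  have sumx: "(\<Sum>a\<in>UNIV. x s a) = y s" for s
    using st by (simp add: x_def sum_distrib_left[symmetric] is_strategy_def)
  have xBB: "xB s = (\<Sum>t\<in>T. y t * M t s)" if "s \<in> B" for s
    using inflow_eq[of s] that sIT Tdisj by (auto simp: xB_def \<alpha>_def)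
  have xBnn: "0 \<le> xB s" if "s \<in> B" for s
    unfolding xBB[OF that] using ynn nn by (intro sum_nonneg mult_nonneg_nonneg) auto
  have fnn: "0 \<le> f k" for k unfolding f_def by (intro sum_nonneg mult_nonneg_nonneg Qp_nonneg nn MBnn)
  have fsum: "summable f" unfolding f_def by (intro summable_sum summable_mult2 summ)
  have sumB: "(\<Sum>s\<in>B. xB s) = suminf f"
  proof -
    have "(\<Sum>s\<in>B. xB s) = (\<Sum>s\<in>B. \<Sum>t\<in>T. y t * M t s)" by (intro sum.cong refl xBB)
    also have "\<dots> = (\<Sum>t\<in>T. \<Sum>s\<in>B. y t * M t s)" by (rule sum.swap)
    also have "\<dots> = (\<Sum>t\<in>T. y t * MB t)" by (simp only: MB_def sum_distrib_left)
    also have "\<dots> = (\<Sum>t\<in>T. \<Sum>n. Qp M T n sI t * MB t)"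
      by (intro sum.cong refl) (simp add: y_def suminf_mult2 summ)
    also have "\<dots> = (\<Sum>n. \<Sum>t\<in>T. Qp M T n sI t * MB t)"
      by (rule suminf_sum[symmetric]) (intro summable_mult2 summ)
    also have "(\<lambda>n. \<Sum>t\<in>T. Qp M T n sI t * MB t) = f" by (rule ext) (simp add: f_def)
    finally show ?thesis .
  qed
  have hform: "reach_n P B \<sigma> n sI = (\<Sum>k<n. f k)" for n
    unfolding f_def MB_def M_def T_def by (rule reach_formula[OF mdp st sI])
  have f1: "suminf f \<le> 1"
    by (rule suminf_le_const[OF fsum]) (use hform reach_n_bounds[OF mdp st] in metis)
  have fbeta: "\<beta> \<le> suminf f"
  proof -
    have "reach_prob P B \<sigma> sI \<le> suminf f" unfolding reach_prob_def
    proof (rule cSUP_least, simp)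
      fix n show "reach_n P B \<sigma> n sI \<le> suminf f"
        unfolding hform by (rule sum_le_suminf[OF fsum]) (simp_all add: fnn)
    qed
    thus ?thesis using beta by linarith
  qed
  have xB1: "xB s \<le> 1" if "s \<in> B" for s
  proof -
    have "xB s \<le> (\<Sum>s\<in>B. xB s)" by (rule member_le_sum[OF that]) (simp_all add: xBnn)
    thus ?thesis using sumB f1 by linarith
  qed
  have dev: "\<bar>x s a - (\<Sum>a'\<in>UNIV. x s a') * \<sigma>h s a\<bar> \<le> deviation \<sigma>h \<sigma> * (\<Sum>a'\<in>UNIV. x s a')" for s a
  proof -
    have "\<bar>x s a - (\<Sum>a'\<in>UNIV. x s a') * \<sigma>h s a\<bar> = y s * \<bar>\<sigma>h s a - \<sigma> s a\<bar>"
    proof -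
      have "x s a - (\<Sum>a'\<in>UNIV. x s a') * \<sigma>h s a = y s * (\<sigma> s a - \<sigma>h s a)"
        unfolding sumx by (simp add: x_def algebra_simps)
      thus ?thesis using ynn[of s] by (simp add: abs_mult abs_minus_commute)
    qed
    also have "\<dots> \<le> y s * deviation \<sigma>h \<sigma>" by (intro mult_left_mono dev_ge ynn)
    finally show ?thesis by (simp add: sumx mult.commute)
  qed
  have xnn: "0 \<le> x s a" for s a
    using ynn st by (simp add: x_def is_strategy_def)
  have flowS: "(\<Sum>a\<in>UNIV. x s a) = inflow P B sI x s" if "s \<in> S_r P B" for s
    using flow_y[of s] inflow_eq[of s] that by (simp add: sumx T_def)
  show ?thesis
  proof (intro exI)
    have e1: "\<forall>s\<in>B. xB s = inflow P B sI x s" by (simp add: xB_def)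
    have e2: "\<beta> \<le> (\<Sum>s\<in>B. xB s)" using fbeta sumB by linarith
    show "nlp_feasible P sI B \<sigma>h \<beta> x xB (deviation \<sigma>h \<sigma>)"
      unfolding nlp_feasible_def
      using dev_bounds[OF hum st] xnn xBnn xB1 flowS e1 e2 dev by blast
  qed
qed


lemma dev_perturb:
  assumes "\<forall>s a. \<bar>\<sigma>' s a - \<sigma> s a\<bar> \<le> \<epsilon>"
  shows "deviation \<sigma>h \<sigma>' \<le> deviation \<sigma>h \<sigma> + \<epsilon>"
  unfolding deviation_def[of \<sigma>h \<sigma>']
proof (subst Max_le_iff, simp, simp, safe)
  fix s a
  have "\<bar>\<sigma>h s a - \<sigma>' s a\<bar> \<le> \<bar>\<sigma>h s a - \<sigma> s a\<bar> + \<bar>\<sigma>' s a - \<sigma> s a\<bar>" by linarith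
  thus "\<bar>\<sigma>h s a - \<sigma>' s a\<bar> \<le> deviation \<sigma>h \<sigma> + \<epsilon>"
    using dev_ge[of \<sigma>h s a \<sigma>] assms by (meson add_mono order_trans)
qed

lemma approx_feasible:
  fixes P :: "'s::finite \<Rightarrow> 'a::finite \<Rightarrow> 's \<Rightarrow> real"
  assumes mdp: "is_mdp P" and hum: "is_strategy \<sigma>h" and st: "is_strategy \<sigma>"
    and beta: "\<beta> \<le> reach_prob P B \<sigma> sI" and e: "0 < \<epsilon>"
  shows "\<exists>\<delta> x xB. nlp_feasible P sI B \<sigma>h \<beta> x xB \<delta> \<and> \<delta> \<le> deviation \<sigma>h \<sigma> + \<epsilon>"
proof -
  define e' where "e' = min \<epsilon> 1"
  have e'0: "0 < e'" "e' \<le> 1" "e' \<le> \<epsilon>" using e by (auto simp: e'_def)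
  obtain \<sigma>' :: "'s \<Rightarrow> 'a \<Rightarrow> real" where st': "is_strategy \<sigma>'" and d: "\<forall>s a. \<bar>\<sigma>' s a - \<sigma> s a\<bar> \<le> e'"
    and r: "reach_prob P B \<sigma> sI \<le> reach_prob P B \<sigma>' sI" and pos: "\<forall>s\<in>S_r P B. 0 < reach_prob P B \<sigma>' s"
    using perturb[OF mdp st e'0(1,2), of B sI] by blast
  have beta': "\<beta> \<le> reach_prob P B \<sigma>' sI" using beta r by linarith
  obtain x xB where f: "nlp_feasible P sI B \<sigma>h \<beta> x xB (deviation \<sigma>h \<sigma>')"
  proof (cases "sI \<in> S_r P B")
    case True
    then show ?thesis using construct_in[OF mdp hum st' pos beta'] that by blast
  next
    case False
    then show ?thesis using construct_out[OF mdp hum st' beta'] that by blast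
  qed
  moreover have "deviation \<sigma>h \<sigma>' \<le> deviation \<sigma>h \<sigma> + \<epsilon>"
    using dev_perturb[OF d, of \<sigma>h] e'0 by linarith
  ultimately show ?thesis by blast
qed

theorem lemma2:
  fixes P :: "'s::finite \<Rightarrow> 'a::finite \<Rightarrow> 's \<Rightarrow> real"
    and sI :: 's and B :: "'s set" and \<sigma>h :: "'s \<Rightarrow> 'a \<Rightarrow> real" and \<beta> :: real
  assumes mdp: "is_mdp P"
    and absorbing: "\<forall>s\<in>B. \<forall>a. P s a s = 1"
    and reachable: "\<forall>s. (sI, s) \<in> {(u, v). \<exists>a. 0 < P u a v}\<^sup>*"
    and hum: "is_strategy \<sigma>h"
    and beta: "0 \<le> \<beta>" "\<beta> \<le> 1"
    and exists: "\<exists>\<sigma>. is_strategy \<sigma> \<and> reach_prob P B \<sigma> sI \<ge> \<beta>"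
  shows "Inf ((\<lambda>\<sigma>. deviation \<sigma>h \<sigma>) ` {\<sigma>. is_strategy \<sigma> \<and> reach_prob P B \<sigma> sI \<ge> \<beta>})
           = Inf {\<delta>. \<exists>x xB. nlp_feasible P sI B \<sigma>h \<beta> x xB \<delta>}
         \<and> (\<forall>x xB \<delta>. nlp_feasible P sI B \<sigma>h \<beta> x xB \<delta> \<longrightarrow>
           is_strategy (recovered P B \<sigma>h x)
           \<and> reach_prob P B (recovered P B \<sigma>h x) sI \<ge> \<beta>
           \<and> deviation \<sigma>h (recovered P B \<sigma>h x) \<le> \<delta>)"
proof -
  define Feas where "Feas = {\<sigma>. is_strategy \<sigma> \<and> reach_prob P B \<sigma> sI \<ge> \<beta>}"
  define L where "L = (\<lambda>\<sigma>. deviation \<sigma>h \<sigma>) ` Feas"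
  define R where "R = {\<delta>. \<exists>x xB. nlp_feasible P sI B \<sigma>h \<beta> x xB \<delta>}"
  have part2: "\<forall>x xB \<delta>. nlp_feasible P sI B \<sigma>h \<beta> x xB \<delta> \<longrightarrow>
           is_strategy (recovered P B \<sigma>h x)
           \<and> reach_prob P B (recovered P B \<sigma>h x) sI \<ge> \<beta>
           \<and> deviation \<sigma>h (recovered P B \<sigma>h x) \<le> \<delta>"
  proof (intro allI impI conjI)
    fix x xB \<delta> assume f: "nlp_feasible P sI B \<sigma>h \<beta> x xB \<delta>"
    show "is_strategy (recovered P B \<sigma>h x)"
      by (rule recovered_strategy[OF hum]) (use f in \<open>simp add: nlp_feasible_def\<close>)
    show "\<beta> \<le> reach_prob P B (recovered P B \<sigma>h x) sI" by (rule recovered_reach[OF mdp hum f])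
    show "deviation \<sigma>h (recovered P B \<sigma>h x) \<le> \<delta>" by (rule recovered_dev[OF f])
  qed
  obtain \<sigma>0 where \<sigma>0: "\<sigma>0 \<in> Feas" using exists by (auto simp: Feas_def)
  have Lne: "L \<noteq> {}" using \<sigma>0 by (auto simp: L_def)
  have Lbdd: "bdd_below L" unfolding L_def Feas_def
    by (rule bdd_belowI[of _ 0]) (use dev_bounds[OF hum] in auto)
  have Rbdd: "bdd_below R" unfolding R_def
    by (rule bdd_belowI[of _ 0]) (auto simp: nlp_feasible_def)
  have approx: "\<exists>\<delta>\<in>R. \<delta> \<le> deviation \<sigma>h \<sigma> + \<epsilon>" if "\<sigma> \<in> Feas" "0 < \<epsilon>" for \<sigma> \<epsilon>
    using approx_feasible[OF mdp hum _ _ that(2), of \<sigma> \<beta> B sI] that(1)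
    by (auto simp: Feas_def R_def)
  have Rne: "R \<noteq> {}" using approx[OF \<sigma>0, of 1] by auto
  have le1: "Inf L \<le> Inf R"
  proof (rule cInf_greatest[OF Rne])
    fix \<delta> assume "\<delta> \<in> R"
    then obtain x xB where f: "nlp_feasible P sI B \<sigma>h \<beta> x xB \<delta>" by (auto simp: R_def)
    have "recovered P B \<sigma>h x \<in> Feas" using part2 f by (auto simp: Feas_def)
    hence "Inf L \<le> deviation \<sigma>h (recovered P B \<sigma>h x)"
      unfolding L_def by (intro cInf_lower) (use Lbdd in \<open>auto simp: L_def\<close>)
    thus "Inf L \<le> \<delta>" using part2 f by (meson order_trans)
  qed
  have le2: "Inf R \<le> Inf L"
  proof (rule cInf_greatest[OF Lne])
    fix d assume "d \<in> L"
    then obtain \<sigma> where \<sigma>: "\<sigma> \<in> Feas" and d: "d = deviation \<sigma>h \<sigma>" by (auto simp: L_def)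
    show "Inf R \<le> d"
    proof (rule field_le_epsilon)
      fix e :: real assume "0 < e"
      then obtain \<delta> where "\<delta> \<in> R" "\<delta> \<le> d + e" using approx[OF \<sigma>] d by blast
      moreover have "Inf R \<le> \<delta>" by (rule cInf_lower[OF \<open>\<delta> \<in> R\<close> Rbdd])
      ultimately show "Inf R \<le> d + e" by linarith
    qed
  qed
  show ?thesis using le1 le2 part2 unfolding L_def Feas_def R_def by auto
qed

end
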